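(* Let $n\ge 2$ and $k\ge 1$. There is no deterministic exploration algorithm that, knowing $n$ and $k$, having unlimited memory, but having no information on (any upper bound on) the system period $p$, solves PVG-Exploration of every feasible anonymous homogeneous PV graph with $n$ sites and $k$ carriers. In other words, in anonymous systems, PVG-Exploration is unsolvable without knowledge of an upper bound on the period, even when restricted to homogeneous systems.
   Context: A PV (periodically varying) system consists of a finite set $S$ of $n$ sites and a set $C$ of $k\le n$ carriers. Each carrier $c$ has a distinct identifier and a route $\pi(c)=\langle x_0,\dots,x_{p(c)-1}\rangle$, a finite sequence of sites (repetitions allowed) of length $p(c)\ge 1$ called its period; for any integer $j$, $\pi(c)[j]$ denotes $x_{j \bmod p(c)}$. At each time $t\in\mathbb{N}$ carrier $c$ is at site $\pi(c)[t]$ and moves to $\pi(c)[t+1]$ (it activates the edge $(\pi(c)[t],\pi(c)[t+1])$ at time $t$). The PV graph $\vec G_R$ (for $R=\{\pi(c):c\in C\}$) is the directed edge-labelled multigraph on $S$ with edges $(x_i,x_{i+1},i)$, $0\le i<p(c)$ (indices mod $p(c)$), for every carrier $c$. Let $p=\max_{c}p(c)$. The system/graph is homogeneous if all carriers have the same period and heterogeneous otherwise. Sites are either anonymous (indistinguishable to the agent) or have distinct identifiers. An exploring agent is injected at time $0$ at a site of $\mathrm{start}(\vec G_R)=\{\pi(c)[0]:c\in C\}$. If at time $t$ the agent is at site $x$, it must either choose a carrier $c$ with $\pi(c)[t]=x$ and ride with it to $\pi(c)[t+1]$ (one move, arriving at time $t+1$), or halt and exit the system; it cannot wait at a site. At each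 time the agent observes the identifiers of the carriers present at its current site (and, in systems with ids, the identifier of the site). An exploration algorithm is a deterministic rule mapping the agent's a priori knowledge and history of observations to its next action; its execution from injection site $x$ determines a walk $\xi(x)$. A walk is a concrete cover if it visits every site of $S$. An algorithm solves PVG-Exploration of $\vec G_R$ if for every injection site $x\in\mathrm{start}(\vec G_R)$ the walk $\xi(x)$ is finite (the agent halts) and is a concrete cover. $\vec G_R$ is feasible if from the starting point of every carrier there exists a walk realizable by the agent (riding carriers and switching between carriers that are at the same site at the same time) that is a concrete cover. *)

theory Defs
  imports Main
begin

text \<open>Sites are the natural numbers 0..<n (anonymous: the agent never observes them).
Carriers are identified by natural-number identifiers forming a finite set C with card C = k;
the route of carrier c is the list R c (its period is length (R c)).\<close>

type_synonym routes = "nat \<Rightarrow> nat list"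

definition at :: "routes \<Rightarrow> nat \<Rightarrow> nat \<Rightarrow> nat" where
  "at R c t = R c ! (t mod length (R c))"

definition pv_system :: "nat \<Rightarrow> nat \<Rightarrow> nat set \<Rightarrow> routes \<Rightarrow> bool" where
  "pv_system n k C R \<longleftrightarrow> finite C \<and> card C = k \<and>
     (\<forall>c\<in>C. R c \<noteq> [] \<and> set (R c) \<subseteq> {0..<n})"

definition homogeneous :: "nat set \<Rightarrow> routes \<Rightarrow> bool" where
  "homogeneous C R \<longleftrightarrow> (\<exists>p. \<forall>c\<in>C. length (R c) = p)"

definition start :: "nat set \<Rightarrow> routes \<Rightarrow> nat set" where
  "start C R = {at R c 0 | c. c \<in> C}"

text \<open>Feasibility: from the starting point of every carrier there is a realizable walk
(riding carriers, switching only between carriers co-located at the same time) visiting all sites.\<close>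
definition feasible :: "nat \<Rightarrow> nat set \<Rightarrow> routes \<Rightarrow> bool" where
  "feasible n C R \<longleftrightarrow> (\<forall>c0\<in>C. \<exists>T w. w 0 = at R c0 0 \<and>
      (\<forall>t<T. \<exists>c\<in>C. at R c t = w t \<and> at R c (Suc t) = w (Suc t)) \<and>
      {0..<n} \<subseteq> w ` {0..T})"

definition obs :: "nat set \<Rightarrow> routes \<Rightarrow> nat \<Rightarrow> nat \<Rightarrow> nat set" where
  "obs C R x t = {c \<in> C. at R c t = x}"

text \<open>An exploration algorithm for anonymous systems maps the history of observations
(observations at times 0..t) to an action: Some c = ride carrier c, None = halt.
Arbitrary functions model unlimited memory; n and k are known since the algorithm
is chosen after n and k are fixed.\<close>
type_synonym algorithm = "nat set list \<Rightarrow> nat option"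

definition observations :: "nat set \<Rightarrow> routes \<Rightarrow> nat list \<Rightarrow> nat set list" where
  "observations C R ps = map (\<lambda>i. obs C R (ps ! i) i) [0..<length ps]"

text \<open>positions A C R x t: the agent's positions at times 0..t (meaningful as long as
the agent has not halted and its choices were valid).\<close>
fun positions :: "algorithm \<Rightarrow> nat set \<Rightarrow> routes \<Rightarrow> nat \<Rightarrow> nat \<Rightarrow> nat list" where
  "positions A C R x 0 = [x]"
| "positions A C R x (Suc t) =
     (let ps = positions A C R x t in
      ps @ [case A (observations C R ps) of Some c \<Rightarrow> at R c (Suc t) | None \<Rightarrow> last ps])"

definition solves_from :: "nat \<Rightarrow> algorithm \<Rightarrow> nat set \<Rightarrow> routes \<Rightarrow> nat \<Rightarrow> bool" where
  "solves_from n A C R x \<longleftrightarrow> (\<exists>T. let ps = positions A C R x T in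
      A (observations C R ps) = None \<and>
      (\<forall>t<T. \<exists>c. A (observations C R (take (Suc t) ps)) = Some c \<and> c \<in> obs C R (ps ! t) t) \<and>
      {0..<n} \<subseteq> set ps)"

definition solves :: "nat \<Rightarrow> algorithm \<Rightarrow> nat set \<Rightarrow> routes \<Rightarrow> bool" where
  "solves n A C R \<longleftrightarrow> (\<forall>x\<in>start C R. solves_from n A C R x)"

end

theory Submission
  imports Defs
begin

lemma pos_len: "length (positions A C R x t) = Suc t"
  by (induction t) (auto simp: Let_def)

lemma pos_prefix: "t \<le> T \<Longrightarrow> take (Suc t) (positions A C R x T) = positions A C R x t"
proof (induction T)
  case 0 then show ?case by simp
next
  case (Suc T)
  show ?case
  proof (cases "t = Suc T")
    case True then show ?thesis using pos_len[of A C R x "Suc T"] by simp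
  next
    case False
    then have "t \<le> T" using Suc.prems by simp
    moreover have "Suc t \<le> length (positions A C R x T)" using pos_len[of A C R x T] \<open>t \<le> T\<close> by simp
    ultimately show ?thesis using Suc.IH by (simp add: Let_def)
  qed
qed

lemma at_const: "at (\<lambda>_. r) c t = at (\<lambda>_. r) 0 t"
  by (simp add: at_def)

lemma obs_const:
  "observations C (\<lambda>_. r) (map (at (\<lambda>_. r) 0) [0..<Suc t]) = replicate (Suc t) C"
proof -
  let ?ps = "map (at (\<lambda>_. r) 0) [0..<Suc t]"
  have l: "length ?ps = Suc t" by simp
  have "\<And>i. i \<in> set [0..<Suc t] \<Longrightarrow> obs C (\<lambda>_. r) (?ps ! i) i = C"
  proof -
    fix i assume "i \<in> set [0..<Suc t]"
    then have "?ps ! i = at (\<lambda>_. r) 0 i" by (simp del: upt_Suc)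
    then show "obs C (\<lambda>_. r) (?ps ! i) i = C" unfolding obs_def by (auto simp: at_def)
  qed
  then have "map (\<lambda>i. obs C (\<lambda>_. r) (?ps ! i) i) [0..<Suc t] = map (\<lambda>_. C) [0..<Suc t]"
    by (rule map_cong[OF refl])
  then show ?thesis unfolding observations_def l by (simp only: map_replicate_const length_upt) simp
qed

lemma main_lemma:
  assumes ne: "r \<noteq> []"
    and val: "\<forall>t<T. \<exists>c. A (observations C (\<lambda>_. r) (take (Suc t) (positions A C (\<lambda>_. r) (r!0) T))) = Some c
         \<and> c \<in> obs C (\<lambda>_. r) (positions A C (\<lambda>_. r) (r!0) T ! t) t"
  shows "t \<le> T \<Longrightarrow> positions A C (\<lambda>_. r) (r!0) t = map (at (\<lambda>_. r) 0) [0..<Suc t]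
     \<and> (t < T \<longrightarrow> A (replicate (Suc t) C) \<noteq> None)"
proof (induction t)
  case 0
  have p: "positions A C (\<lambda>_. r) (r!0) 0 = map (at (\<lambda>_. r) 0) [0..<Suc 0]"
    using ne by (simp add: at_def)
  moreover have "0 < T \<longrightarrow> A (replicate (Suc 0) C) \<noteq> None"
  proof
    assume "0 < T"
    then obtain c where "A (observations C (\<lambda>_. r) (take (Suc 0) (positions A C (\<lambda>_. r) (r!0) T))) = Some c"
      using val by blast
    then show "A (replicate (Suc 0) C) \<noteq> None"
      using pos_prefix[of 0 T A C "\<lambda>_. r" "r!0"] p obs_const[of C r 0] by simp
  qed
  ultimately show ?case by blast
next
  case (Suc t)
  then have tT: "t < T" by simp
  with Suc have IH: "positions A C (\<lambda>_. r) (r!0) t = map (at (\<lambda>_. r) 0) [0..<Suc t]" by simp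
  from val tT obtain c where c1: "A (observations C (\<lambda>_. r) (take (Suc t) (positions A C (\<lambda>_. r) (r!0) T))) = Some c"
    and c2: "c \<in> obs C (\<lambda>_. r) (positions A C (\<lambda>_. r) (r!0) T ! t) t" by blast
  have tk: "take (Suc t) (positions A C (\<lambda>_. r) (r!0) T) = positions A C (\<lambda>_. r) (r!0) t"
    using pos_prefix tT by simp
  have ca: "A (observations C (\<lambda>_. r) (positions A C (\<lambda>_. r) (r!0) t)) = Some c" using c1 tk by simp
  have p: "positions A C (\<lambda>_. r) (r!0) (Suc t) = map (at (\<lambda>_. r) 0) [0..<Suc (Suc t)]"
    using ca IH by (simp add: Let_def at_def)
  moreover have "Suc t < T \<longrightarrow> A (replicate (Suc (Suc t)) C) \<noteq> None"
  proof
    assume st: "Suc t < T"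
    then obtain c' where "A (observations C (\<lambda>_. r) (take (Suc (Suc t)) (positions A C (\<lambda>_. r) (r!0) T))) = Some c'"
      using val by blast
    then show "A (replicate (Suc (Suc t)) C) \<noteq> None"
      using pos_prefix[of "Suc t" T A C "\<lambda>_. r" "r!0"] st p obs_const[of C r "Suc t"] by simp
  qed
  ultimately show ?case by blast
qed

lemma solves_const:
  assumes ne: "r \<noteq> []" and sol: "solves_from n A C (\<lambda>_. r) (r!0)"
  shows "\<exists>T. A (replicate (Suc T) C) = None \<and> (\<forall>t<T. A (replicate (Suc t) C) \<noteq> None)
     \<and> {0..<n} \<subseteq> set (map (at (\<lambda>_. r) 0) [0..<Suc T])"
proof -
  from sol obtain T where
    h1: "A (observations C (\<lambda>_. r) (positions A C (\<lambda>_. r) (r!0) T)) = None" and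
    h2: "\<forall>t<T. \<exists>c. A (observations C (\<lambda>_. r) (take (Suc t) (positions A C (\<lambda>_. r) (r!0) T))) = Some c
         \<and> c \<in> obs C (\<lambda>_. r) (positions A C (\<lambda>_. r) (r!0) T ! t) t" and
    h3: "{0..<n} \<subseteq> set (positions A C (\<lambda>_. r) (r!0) T)"
    unfolding solves_from_def Let_def by blast
  have m: "\<And>t. t \<le> T \<Longrightarrow> positions A C (\<lambda>_. r) (r!0) t = map (at (\<lambda>_. r) 0) [0..<Suc t]
     \<and> (t < T \<longrightarrow> A (replicate (Suc t) C) \<noteq> None)"
    using main_lemma[OF ne h2] by blast
  have pT: "positions A C (\<lambda>_. r) (r!0) T = map (at (\<lambda>_. r) 0) [0..<Suc T]" using m by simp
  show ?thesis
    apply (rule exI[of _ T])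
    using h1 h3 pT m obs_const[of C r T] by auto
qed

lemma feasible_const:
  assumes ne: "r \<noteq> []" and cov: "{0..<n} \<subseteq> set r"
  shows "feasible n C (\<lambda>_. r)"
  unfolding feasible_def
proof (intro ballI)
  fix c0 assume "c0 \<in> C"
  let ?w = "at (\<lambda>_. r) 0"
  have "{0..<n} \<subseteq> ?w ` {0..length r - 1}"
  proof
    fix x assume "x \<in> {0..<n}"
    then have "x \<in> set r" using cov by blast
    then obtain i where i: "i < length r" "r ! i = x" by (auto simp: in_set_conv_nth)
    then have "?w i = x" by (simp add: at_def)
    moreover have "i \<in> {0..length r - 1}" using i by simp
    ultimately show "x \<in> ?w ` {0..length r - 1}" by blast
  qed
  moreover have "?w 0 = at (\<lambda>_. r) c0 0" by (simp add: at_def)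
  moreover have "\<forall>t<length r - 1. \<exists>c\<in>C. at (\<lambda>_. r) c t = ?w t \<and> at (\<lambda>_. r) c (Suc t) = ?w (Suc t)"
    using \<open>c0 \<in> C\<close> by (auto simp: at_def)
  ultimately show "\<exists>T w. w 0 = at (\<lambda>_. r) c0 0 \<and>
      (\<forall>t<T. \<exists>c\<in>C. at (\<lambda>_. r) c t = w t \<and> at (\<lambda>_. r) c (Suc t) = w (Suc t)) \<and>
      {0..<n} \<subseteq> w ` {0..T}" by blast
qed

lemma start_const: "C \<noteq> {} \<Longrightarrow> r \<noteq> [] \<Longrightarrow> r ! 0 \<in> start C (\<lambda>_. r)"
  by (auto simp: start_def at_def)

lemma good_const:
  assumes "set r = {0..<n}" "r \<noteq> []" "k \<ge> 1"
  shows "pv_system n k {0..<k} (\<lambda>_. r) \<and> homogeneous {0..<k} (\<lambda>_. r) \<and> feasible n {0..<k} (\<lambda>_. r)"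
  using assms feasible_const[of r n "{0..<k}"]
  by (auto simp: pv_system_def homogeneous_def)

theorem mainTheorem1:
  fixes n k :: nat
  assumes "n \<ge> 2" and "k \<ge> 1" and "k \<le> n"
  shows "\<not> (\<exists>A :: algorithm. \<forall>C R. pv_system n k C R \<and> homogeneous C R \<and> feasible n C R
              \<longrightarrow> solves n A C R)"
proof
  assume "\<exists>A :: algorithm. \<forall>C R. pv_system n k C R \<and> homogeneous C R \<and> feasible n C R
              \<longrightarrow> solves n A C R"
  then obtain A :: algorithm where hA: "\<forall>C R. pv_system n k C R \<and> homogeneous C R \<and> feasible n C R
              \<longrightarrow> solves n A C R" by blast
  let ?C = "{0..<k} :: nat set"
  have Cne: "?C \<noteq> {}" using assms by simp
  define r1 where "r1 = [0..<n]"
  have r1: "set r1 = {0..<n}" "r1 \<noteq> []" "r1 ! 0 = 0" using assms by (auto simp: r1_def)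
  have "solves n A ?C (\<lambda>_. r1)" by (rule hA[rule_format, OF good_const[OF r1(1,2) assms(2)]])
  then have "solves_from n A ?C (\<lambda>_. r1) (r1!0)" using start_const[OF Cne r1(2)] unfolding solves_def by blast
  then obtain T1 where T1: "A (replicate (Suc T1) ?C) = None" using solves_const[OF r1(2)] by blast
  define r2 where "r2 = replicate (Suc T1) (0::nat) @ [1..<n]"
  have s12: "set [1..<n] = {1..<n}" by simp
  have "set r2 = {0} \<union> {1..<n}" unfolding r2_def set_append s12
    by (simp only: set_replicate_Suc)
  also have "\<dots> = {0..<n}" using assms by auto
  finally have r2a: "set r2 = {0..<n}" .
  have r2b: "r2 \<noteq> []" unfolding r2_def by simp
  note r2 = r2a r2b
  have "solves n A ?C (\<lambda>_. r2)" by (rule hA[rule_format, OF good_const[OF r2(1,2) assms(2)]])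
  then have "solves_from n A ?C (\<lambda>_. r2) (r2!0)" using start_const[OF Cne r2(2)] unfolding solves_def by blast
  then obtain T2 where T2a: "\<forall>t<T2. A (replicate (Suc t) ?C) \<noteq> None"
     and T2b: "{0..<n} \<subseteq> set (map (at (\<lambda>_. r2) 0) [0..<Suc T2])"
    using solves_const[OF r2(2)] by blast
  have "T2 \<le> T1"
  proof (rule ccontr)
    assume "\<not> T2 \<le> T1"
    then have "T1 < T2" by simp
    then show False using T1 T2a by blast
  qed
  have "\<forall>i\<le>T2. at (\<lambda>_. r2) 0 i = 0"
  proof (intro allI impI)
    fix i assume "i \<le> T2"
    then have "i < length r2" "i < Suc T1" using \<open>T2 \<le> T1\<close> by (auto simp: r2_def)
    then have "r2 ! i = 0" unfolding r2_def
      using nth_append[of "replicate (Suc T1) (0::nat)" "[1..<n]" i] nth_replicate[of i "Suc T1" "0::nat"]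
      by (simp only: length_replicate if_True)
    then show "at (\<lambda>_. r2) 0 i = 0" using \<open>i < length r2\<close> by (simp add: at_def)
  qed
  then have "set (map (at (\<lambda>_. r2) 0) [0..<Suc T2]) \<subseteq> {0}" by auto
  moreover have "1 \<in> {0..<n}" using assms by simp
  ultimately have "(1::nat) \<in> {0}" using T2b by (meson subsetD)
  then show False by simp
qed

end
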